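(* Let $d\ge1$ and let $P$ be a probability distribution on $\{0,1\}^d$ with $P(\nu)>0$ for every $\nu\in\{0,1\}^d$. Define \[ \lambda(P):=\sup\{\lambda\ge0\mid \exists\, Q \text{ a probability distribution on }\{0,1\}^d\text{ with independent marginals such that } P(\nu)\ge\lambda Q(\nu)\ \forall \nu\in\{0,1\}^d\}. \] For $\omega\in\{0,1\}^d$ and $q\in[0,1]^d$ let $f_\omega(q):=\prod_{i=1}^d q_i^{-\omega_i}(1-q_i)^{\omega_i-1}\in\mathbb{R}\cup\{+\infty\}$ (with $0^0=1$, $1/0=+\infty$), and let \[ \mathcal{Q}_\omega:=\{q\in[0,1]^d \mid \forall \nu\in\{0,1\}^d:\ P(\omega)f_\omega(q)\le P(\nu)f_\nu(q)\}. \] Then \[ \lambda(P)=\max_{\omega\in\{0,1\}^d}\ \max_{q\in\mathcal{Q}_\omega} P(\omega)f_\omega(q). \]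
   Context: A probability distribution $Q$ on $\{0,1\}^d$ has independent marginals if $Q=\mu_1\otimes\cdots\otimes\mu_d$ for some probability distributions $\mu_1,\ldots,\mu_d$ on $\{0,1\}$, i.e. $Q$ is the law of a vector of independent (not necessarily identically distributed) Bernoulli random variables. *)

theory Defs
  imports "HOL-Analysis.Analysis"
begin

text \<open>The cube {0,1}^d, points as extensional functions {..<d} -> bool
  (True = 1, False = 0).\<close>
definition cube :: "nat \<Rightarrow> (nat \<Rightarrow> bool) set" where
  "cube d = ({..<d} \<rightarrow>\<^sub>E (UNIV :: bool set))"

definition prob_dist :: "nat \<Rightarrow> ((nat \<Rightarrow> bool) \<Rightarrow> real) \<Rightarrow> bool" where
  "prob_dist d Q \<longleftrightarrow> (\<forall>\<nu>\<in>cube d. Q \<nu> \<ge> 0) \<and> (\<Sum>\<nu>\<in>cube d. Q \<nu>) = 1"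

definition indep_marginals :: "nat \<Rightarrow> ((nat \<Rightarrow> bool) \<Rightarrow> real) \<Rightarrow> bool" where
  "indep_marginals d Q \<longleftrightarrow>
     (\<exists>\<mu> :: nat \<Rightarrow> bool \<Rightarrow> real.
        (\<forall>i<d. \<mu> i True \<ge> 0 \<and> \<mu> i False \<ge> 0 \<and> \<mu> i True + \<mu> i False = 1) \<and>
        (\<forall>\<nu>\<in>cube d. Q \<nu> = (\<Prod>i<d. \<mu> i (\<nu> i))))"

definition lambdaP :: "nat \<Rightarrow> ((nat \<Rightarrow> bool) \<Rightarrow> real) \<Rightarrow> real" where
  "lambdaP d P = Sup {l. l \<ge> 0 \<and> (\<exists>Q. prob_dist d Q \<and> indep_marginals d Q \<and>
                                 (\<forall>\<nu>\<in>cube d. P \<nu> \<ge> l * Q \<nu>))}"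

text \<open>f_omega(q) = prod_i q_i^(-omega_i) (1-q_i)^(omega_i - 1), valued in ereal,
  with 1/0 = +infinity (inverse of ereal 0 is PInfty).\<close>
definition f_om :: "nat \<Rightarrow> (nat \<Rightarrow> bool) \<Rightarrow> (nat \<Rightarrow> real) \<Rightarrow> ereal" where
  "f_om d \<omega> q = (\<Prod>i<d. if \<omega> i then inverse (ereal (q i)) else inverse (ereal (1 - q i)))"

definition Qset :: "nat \<Rightarrow> ((nat \<Rightarrow> bool) \<Rightarrow> real) \<Rightarrow> (nat \<Rightarrow> bool) \<Rightarrow> (nat \<Rightarrow> real) set" where
  "Qset d P \<omega> = {q. q \<in> {..<d} \<rightarrow> {0..1} \<and>
      (\<forall>\<nu>\<in>cube d. ereal (P \<omega>) * f_om d \<omega> q \<le> ereal (P \<nu>) * f_om d \<nu> q)}"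

end

theory Submission
  imports Defs
begin

definition Qq :: "nat \<Rightarrow> (nat \<Rightarrow> real) \<Rightarrow> (nat \<Rightarrow> bool) \<Rightarrow> real" where
  "Qq d q \<nu> = (\<Prod>i<d. if \<nu> i then q i else 1 - q i)"

lemma Qq_sum: "(\<Sum>\<nu>\<in>cube d. Qq d q \<nu>) = 1"
proof -
  have "(\<Prod>i<d. \<Sum>b\<in>(UNIV::bool set). (if b then q i else 1 - q i)) =
        (\<Sum>\<nu>\<in>cube d. \<Prod>i<d. if \<nu> i then q i else 1 - q i)"
    unfolding cube_def by (rule prod_sum_PiE) auto
  moreover have "(\<Prod>i<d. \<Sum>b\<in>(UNIV::bool set). (if b then q i else 1 - q i)) = 1"
    by (simp add: UNIV_bool)
  ultimately show ?thesis unfolding Qq_def by simp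
qed

lemma Qq_nonneg: "q \<in> {..<d} \<rightarrow> {0..1} \<Longrightarrow> Qq d q \<nu> \<ge> 0"
  unfolding Qq_def by (intro prod_nonneg) auto

lemma inv_mult_ereal: "a \<ge> 0 \<Longrightarrow> b \<ge> 0 \<Longrightarrow>
   inverse (ereal a) * inverse (ereal b) = inverse (ereal (a * b))"
  by (cases "a = 0"; cases "b = 0") auto

lemma prod_inv_ereal: "finite A \<Longrightarrow> \<forall>i\<in>A. g i \<ge> 0 \<Longrightarrow>
   (\<Prod>i\<in>A. inverse (ereal (g i))) = inverse (ereal (\<Prod>i\<in>A. g i))"
proof (induction A rule: finite_induct)
  case empty then show ?case by (simp add: one_ereal_def)
next
  case (insert x F)
  have IH: "(\<Prod>i\<in>F. inverse (ereal (g i))) = inverse (ereal (\<Prod>i\<in>F. g i))"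
    using insert.prems by (intro insert.IH) auto
  have "(\<Prod>i\<in>insert x F. inverse (ereal (g i))) = inverse (ereal (g x)) * inverse (ereal (\<Prod>i\<in>F. g i))"
    by (simp only: prod.insert[OF insert(1,2)] IH)
  also have "\<dots> = inverse (ereal (g x * (\<Prod>i\<in>F. g i)))"
    using insert.prems by (intro inv_mult_ereal prod_nonneg) auto
  finally show ?case by (simp only: prod.insert[OF insert(1,2)])
qed

lemma f_om_Qq: "q \<in> {..<d} \<rightarrow> {0..1} \<Longrightarrow> f_om d \<omega> q = inverse (ereal (Qq d q \<omega>))"
proof -
  assume q: "q \<in> {..<d} \<rightarrow> {0..1}"
  have "f_om d \<omega> q = (\<Prod>i<d. inverse (ereal (if \<omega> i then q i else 1 - q i)))"
    unfolding f_om_def by (intro prod.cong) auto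
  also have "\<dots> = inverse (ereal (Qq d q \<omega>))" unfolding Qq_def
    using q by (intro prod_inv_ereal) auto
  finally show ?thesis .
qed

lemma Pf_eq: "q \<in> {..<d} \<rightarrow> {0..1} \<Longrightarrow> p > 0 \<Longrightarrow>
  ereal p * f_om d \<nu> q = (if Qq d q \<nu> = 0 then \<infinity> else ereal (p / Qq d q \<nu>))"
  by (simp add: f_om_Qq divide_inverse)

lemma compact_cubeq: "compact (PiE {..<d} (\<lambda>_. {0..1::real}))"
proof -
  have eq: "PiE {..<d} (\<lambda>_. {0..1::real}) = PiE UNIV (\<lambda>i. if i < d then {0..1} else {undefined})"
    by (auto simp: PiE_def extensional_def Pi_def)
  have "compactin (product_topology (\<lambda>_. euclidean) UNIV) (PiE UNIV (\<lambda>i. if i < d then {0..1::real} else {undefined}))"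
    by (subst compactin_PiE) auto
  then show ?thesis unfolding eq euclidean_product_topology by simp
qed

lemma cont_snd_i: "continuous_on UNIV (\<lambda>x::real \<times> (nat \<Rightarrow> real). snd x i)"
  by (rule continuous_on_product_then_coordinatewise) (intro continuous_intros)

lemma cont_Qq: "continuous_on UNIV (\<lambda>x::real \<times> (nat \<Rightarrow> real). fst x * Qq d (snd x) \<nu>)"
  unfolding Qq_def
proof (intro continuous_on_mult continuous_on_fst continuous_on_id continuous_on_prod)
  fix i show "continuous_on UNIV (\<lambda>x::real \<times> (nat \<Rightarrow> real). if \<nu> i then snd x i else 1 - snd x i)"
    by (cases "\<nu> i") (simp_all add: cont_snd_i continuous_on_diff continuous_on_const)
qed

lemma closed_K: "closed (\<Inter>\<nu>\<in>cube d. {x::real \<times> (nat \<Rightarrow> real). fst x * Qq d (snd x) \<nu> \<le> P \<nu>})"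
  by (intro closed_INT ballI closed_Collect_le cont_Qq continuous_intros)

lemma finite_cube: "finite (cube d)"
  unfolding cube_def by (intro finite_PiE) auto

lemma Qq_pos_ex: "q \<in> {..<d} \<rightarrow> {0..1} \<Longrightarrow> \<exists>\<nu>\<in>cube d. Qq d q \<nu> > 0"
proof (rule ccontr)
  assume q: "q \<in> {..<d} \<rightarrow> {0..1}" and "\<not> (\<exists>\<nu>\<in>cube d. Qq d q \<nu> > 0)"
  then have "\<forall>\<nu>\<in>cube d. Qq d q \<nu> = 0" using Qq_nonneg[OF q] by (meson antisym not_le)
  then have "(\<Sum>\<nu>\<in>cube d. Qq d q \<nu>) = 0" by simp
  then show False using Qq_sum[of d q] by simp
qed

lemma L_intro:
  assumes "q \<in> {..<d} \<rightarrow> {0..1}" "l \<ge> 0" "\<forall>\<nu>\<in>cube d. l * Qq d q \<nu> \<le> P \<nu>"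
  shows "l \<in> {l. l \<ge> 0 \<and> (\<exists>Q. prob_dist d Q \<and> indep_marginals d Q \<and> (\<forall>\<nu>\<in>cube d. P \<nu> \<ge> l * Q \<nu>))}"
proof -
  have "prob_dist d (Qq d q)" unfolding prob_dist_def using Qq_nonneg[OF assms(1)] Qq_sum by auto
  moreover have "indep_marginals d (Qq d q)" unfolding indep_marginals_def
    using assms(1) by (intro exI[of _ "\<lambda>i b. if b then q i else 1 - q i"]) (auto simp: Qq_def)
  ultimately show ?thesis using assms by auto
qed

lemma L_elim:
  assumes "l \<in> {l. l \<ge> 0 \<and> (\<exists>Q. prob_dist d Q \<and> indep_marginals d Q \<and> (\<forall>\<nu>\<in>cube d. P \<nu> \<ge> l * Q \<nu>))}"
  shows "\<exists>q\<in>PiE {..<d} (\<lambda>_. {0..1}). \<forall>\<nu>\<in>cube d. l * Qq d q \<nu> \<le> P \<nu>"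
proof -
  obtain Q \<mu> where Q: "\<forall>\<nu>\<in>cube d. P \<nu> \<ge> l * Q \<nu>"
    and mu: "\<forall>i<d. \<mu> i True \<ge> 0 \<and> \<mu> i False \<ge> 0 \<and> \<mu> i True + \<mu> i False = 1"
    and Qe: "\<forall>\<nu>\<in>cube d. Q \<nu> = (\<Prod>i<d. \<mu> i (\<nu> i))"
    using assms unfolding indep_marginals_def by auto
  define q where "q = restrict (\<lambda>i. \<mu> i True) {..<d}"
  have qin: "q \<in> PiE {..<d} (\<lambda>_. {0..1})" unfolding q_def using mu
    by (auto simp: PiE_iff)
  have "Q \<nu> = Qq d q \<nu>" if "\<nu> \<in> cube d" for \<nu>
  proof -
    have "Q \<nu> = (\<Prod>i<d. \<mu> i (\<nu> i))" using Qe that by auto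
    also have "\<dots> = Qq d q \<nu>" unfolding Qq_def q_def
    proof (intro prod.cong refl)
      fix i assume "i \<in> {..<d}"
      then show "\<mu> i (\<nu> i) = (if \<nu> i then restrict (\<lambda>i. \<mu> i True) {..<d} i else 1 - restrict (\<lambda>i. \<mu> i True) {..<d} i)"
        using mu by (cases "\<nu> i") (auto simp: algebra_simps)
    qed
    finally show ?thesis .
  qed
  then show ?thesis using qin Q by auto
qed

lemma bound1:
  assumes "prob_dist d P" "q \<in> {..<d} \<rightarrow> {0..1}" "\<forall>\<nu>\<in>cube d. l * Qq d q \<nu> \<le> P \<nu>"
  shows "l \<le> 1"
proof -
  have "l = (\<Sum>\<nu>\<in>cube d. l * Qq d q \<nu>)" by (simp add: sum_distrib_left[symmetric] Qq_sum)
  also have "\<dots> \<le> (\<Sum>\<nu>\<in>cube d. P \<nu>)" using assms(3) by (intro sum_mono) auto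
  also have "\<dots> = 1" using assms(1) unfolding prob_dist_def by auto
  finally show ?thesis .
qed

theorem lemma2:
  fixes d :: nat and P :: "(nat \<Rightarrow> bool) \<Rightarrow> real"
  assumes "d \<ge> 1"
    and "prob_dist d P"
    and "\<forall>\<nu>\<in>cube d. P \<nu> > 0"
  shows "(\<exists>\<omega>\<in>cube d. \<exists>q\<in>Qset d P \<omega>. ereal (P \<omega>) * f_om d \<omega> q = ereal (lambdaP d P))
       \<and> (\<forall>\<omega>\<in>cube d. \<forall>q\<in>Qset d P \<omega>. ereal (P \<omega>) * f_om d \<omega> q \<le> ereal (lambdaP d P))"
proof -
  note Ppos = assms(3)
  define L where "L = {l. l \<ge> 0 \<and> (\<exists>Q. prob_dist d Q \<and> indep_marginals d Q \<and> (\<forall>\<nu>\<in>cube d. P \<nu> \<ge> l * Q \<nu>))}"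
  have lam: "lambdaP d P = Sup L" unfolding lambdaP_def L_def ..
  define K where "K = ({0..1::real} \<times> PiE {..<d} (\<lambda>_. {0..1::real})) \<inter>
     (\<Inter>\<nu>\<in>cube d. {x::real \<times> (nat \<Rightarrow> real). fst x * Qq d (snd x) \<nu> \<le> P \<nu>})"
  have "compact K" unfolding K_def
    by (intro compact_Int_closed compact_Times compact_cubeq closed_K compact_Icc)
  moreover have "(0, \<lambda>i. if i < d then 0 else undefined) \<in> K"
    unfolding K_def using Ppos by (auto simp: PiE_iff extensional_def less_imp_le)
  then have "K \<noteq> {}" by blast
  ultimately obtain xs where xs: "xs \<in> K" and xsmax: "\<forall>y\<in>K. fst y \<le> fst xs"
    using continuous_attains_sup[of K fst] continuous_on_fst[OF continuous_on_id] by blast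
  obtain ls qs where xse: "xs = (ls, qs)" by fastforce
  have qsE: "qs \<in> PiE {..<d} (\<lambda>_. {0..1})" and ls01: "ls \<in> {0..1}"
    and lsc: "\<forall>\<nu>\<in>cube d. ls * Qq d qs \<nu> \<le> P \<nu>"
    using xs unfolding K_def xse by auto
  have qsP: "qs \<in> {..<d} \<rightarrow> {0..1}" using qsE by (auto simp: PiE_iff)
  define V where "V = {\<nu>\<in>cube d. Qq d qs \<nu> > 0}"
  have "finite V" unfolding V_def using finite_cube by auto
  moreover have "V \<noteq> {}" unfolding V_def using Qq_pos_ex[OF qsP] by auto
  ultimately have "Min ((\<lambda>\<nu>. P \<nu> / Qq d qs \<nu>) ` V) \<in> (\<lambda>\<nu>. P \<nu> / Qq d qs \<nu>) ` V"
    by (intro Min_in) auto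
  then obtain \<omega> where \<omega>V: "\<omega> \<in> V" and \<omega>min: "P \<omega> / Qq d qs \<omega> = Min ((\<lambda>\<nu>. P \<nu> / Qq d qs \<nu>) ` V)"
    by auto
  define m where "m = P \<omega> / Qq d qs \<omega>"
  have mmin: "\<forall>\<nu>\<in>V. m \<le> P \<nu> / Qq d qs \<nu>" unfolding m_def \<omega>min using \<open>finite V\<close> by auto
  have \<omega>c: "\<omega> \<in> cube d" and Q\<omega>: "Qq d qs \<omega> > 0" using \<omega>V V_def by auto
  have m0: "m \<ge> 0" unfolding m_def using Ppos \<omega>c Q\<omega> by (auto intro: less_imp_le)
  have mc: "\<forall>\<nu>\<in>cube d. m * Qq d qs \<nu> \<le> P \<nu>"
  proof
    fix \<nu> assume \<nu>: "\<nu> \<in> cube d"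
    show "m * Qq d qs \<nu> \<le> P \<nu>"
    proof (cases "Qq d qs \<nu> = 0")
      case True then show ?thesis using Ppos \<nu> by (auto intro: less_imp_le)
    next
      case False
      then have "Qq d qs \<nu> > 0" using Qq_nonneg[OF qsP, of \<nu>] by auto
      then have "\<nu> \<in> V" using \<nu> V_def by auto
      then have "m \<le> P \<nu> / Qq d qs \<nu>" using mmin by auto
      then show ?thesis using \<open>Qq d qs \<nu> > 0\<close> by (simp add: pos_le_divide_eq)
    qed
  qed
  have m1: "m \<le> 1" using bound1[OF assms(2) qsP mc] .
  have "(m, qs) \<in> K" unfolding K_def using m0 m1 qsE mc by auto
  then have "m \<le> ls" using xsmax xse by force
  have "ls \<le> m" unfolding m_def using lsc \<omega>c Q\<omega> by (simp add: pos_le_divide_eq)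
  have mL: "m \<in> L" unfolding L_def using L_intro[OF qsP m0 mc] .
  have Lub: "\<forall>l\<in>L. l \<le> m"
  proof
    fix l assume "l \<in> L"
    then obtain q where q: "q \<in> PiE {..<d} (\<lambda>_. {0..1})" and qc: "\<forall>\<nu>\<in>cube d. l * Qq d q \<nu> \<le> P \<nu>"
      using L_elim unfolding L_def by blast
    have "q \<in> {..<d} \<rightarrow> {0..1}" using q by (auto simp: PiE_iff)
    then have "l \<le> 1" using bound1[OF assms(2) _ qc] by auto
    then have "(l, q) \<in> K" unfolding K_def using q qc \<open>l \<in> L\<close> L_def by auto
    then have "l \<le> ls" using xsmax xse by force
    then show "l \<le> m" using \<open>ls \<le> m\<close> by simp
  qed
  have lamm: "lambdaP d P = m" unfolding lam using mL Lub by (intro cSup_eq_maximum) auto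
  have part1: "\<exists>\<omega>\<in>cube d. \<exists>q\<in>Qset d P \<omega>. ereal (P \<omega>) * f_om d \<omega> q = ereal (lambdaP d P)"
  proof (intro bexI)
    have val: "ereal (P \<omega>) * f_om d \<omega> qs = ereal m"
      using Pf_eq[OF qsP, of "P \<omega>" \<omega>] Ppos \<omega>c Q\<omega> m_def by auto
    show "ereal (P \<omega>) * f_om d \<omega> qs = ereal (lambdaP d P)" using val lamm by simp
    show "qs \<in> Qset d P \<omega>" unfolding Qset_def
    proof (intro CollectI conjI qsP ballI)
      fix \<nu> assume \<nu>: "\<nu> \<in> cube d"
      show "ereal (P \<omega>) * f_om d \<omega> qs \<le> ereal (P \<nu>) * f_om d \<nu> qs"
      proof (cases "Qq d qs \<nu> = 0")
        case True
        have "ereal (P \<nu>) * f_om d \<nu> qs = \<infinity>"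
          using Pf_eq[OF qsP, of "P \<nu>" \<nu>] Ppos \<nu> True by simp
        then show ?thesis by (metis ereal_less_eq(1))
      next
        case False
        then have "Qq d qs \<nu> > 0" using Qq_nonneg[OF qsP, of \<nu>] by auto
        then have "\<nu> \<in> V" using \<nu> V_def by auto
        then have "m \<le> P \<nu> / Qq d qs \<nu>" using mmin by auto
        then show ?thesis using val Pf_eq[OF qsP, of "P \<nu>" \<nu>] Ppos \<nu> False by simp
      qed
    qed
  qed (rule \<omega>c)
  have bdd: "bdd_above L"
  proof (rule bdd_aboveI)
    fix l assume "l \<in> L"
    then obtain q where q: "q \<in> PiE {..<d} (\<lambda>_. {0..1})" and qc: "\<forall>\<nu>\<in>cube d. l * Qq d q \<nu> \<le> P \<nu>"
      using L_elim unfolding L_def by blast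
    have "q \<in> {..<d} \<rightarrow> {0..1}" using q by (auto simp: PiE_iff)
    then show "l \<le> 1" using bound1[OF assms(2) _ qc] by auto
  qed
  have part2: "\<forall>\<omega>\<in>cube d. \<forall>q\<in>Qset d P \<omega>. ereal (P \<omega>) * f_om d \<omega> q \<le> ereal (lambdaP d P)"
  proof (intro ballI)
    fix \<omega>' q assume \<omega>': "\<omega>' \<in> cube d" and "q \<in> Qset d P \<omega>'"
    then have qP: "q \<in> {..<d} \<rightarrow> {0..1}"
      and hq: "\<forall>\<nu>\<in>cube d. ereal (P \<omega>') * f_om d \<omega>' q \<le> ereal (P \<nu>) * f_om d \<nu> q"
      unfolding Qset_def by auto
    obtain \<nu>0 where \<nu>0: "\<nu>0 \<in> cube d" "Qq d q \<nu>0 > 0" using Qq_pos_ex[OF qP] by auto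
    have "Qq d q \<omega>' \<noteq> 0"
    proof
      assume "Qq d q \<omega>' = 0"
      then have "ereal (P \<omega>') * f_om d \<omega>' q = \<infinity>" using Pf_eq[OF qP, of "P \<omega>'" \<omega>'] Ppos \<omega>' by simp
      moreover have "ereal (P \<nu>0) * f_om d \<nu>0 q \<noteq> \<infinity>" using Pf_eq[OF qP, of "P \<nu>0" \<nu>0] Ppos \<nu>0 by simp
      ultimately show False using hq \<nu>0 by force
    qed
    define m' where "m' = P \<omega>' / Qq d q \<omega>'"
    have val: "ereal (P \<omega>') * f_om d \<omega>' q = ereal m'"
      using Pf_eq[OF qP, of "P \<omega>'" \<omega>'] Ppos \<omega>' \<open>Qq d q \<omega>' \<noteq> 0\<close> m'_def by auto
    have Q\<omega>': "Qq d q \<omega>' > 0" using Qq_nonneg[OF qP, of \<omega>'] \<open>Qq d q \<omega>' \<noteq> 0\<close> by auto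
    have m'0: "m' \<ge> 0" unfolding m'_def using Ppos \<omega>' Q\<omega>' by (auto intro: less_imp_le)
    have m'c: "\<forall>\<nu>\<in>cube d. m' * Qq d q \<nu> \<le> P \<nu>"
    proof
      fix \<nu> assume \<nu>: "\<nu> \<in> cube d"
      show "m' * Qq d q \<nu> \<le> P \<nu>"
      proof (cases "Qq d q \<nu> = 0")
        case True then show ?thesis using Ppos \<nu> by (auto intro: less_imp_le)
      next
        case False
        then have pos: "Qq d q \<nu> > 0" using Qq_nonneg[OF qP, of \<nu>] by auto
        have "ereal m' \<le> ereal (P \<nu> / Qq d q \<nu>)"
          using hq \<nu> val Pf_eq[OF qP, of "P \<nu>" \<nu>] Ppos False by force
        then have "m' \<le> P \<nu> / Qq d q \<nu>" by simp
        then show ?thesis using pos by (simp add: pos_le_divide_eq)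
      qed
    qed
    have "m' \<in> L" unfolding L_def using L_intro[OF qP m'0 m'c] .
    then have "m' \<le> Sup L" using bdd by (intro cSup_upper)
    then show "ereal (P \<omega>') * f_om d \<omega>' q \<le> ereal (lambdaP d P)" using val lam by simp
  qed
  show ?thesis using part1 part2 by blast
qed

end
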